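(* Let $\Phi$ be a $\mathsf{BST}^{\otimes}$-conjunction and let $\Sigma$ be a partition satisfying $\Phi$ via a partition assignment $\mathfrak I:\mathrm{Vars}(\Phi)\to\mathcal P(\Sigma)$. Let $\mathcal G_\Sigma=(\mathcal P_\Sigma,\mathcal N_\Sigma,\mathcal T_\Sigma)$ be the $\otimes$-graph induced by $\Sigma$ via a bijection $q\mapsto q^{(\bullet)}$ from $\mathcal P_\Sigma$ onto $\Sigma$. Then the map $\mathfrak F_\Sigma(x)=\{q\in\mathcal P_\Sigma : q^{(\bullet)}\in\mathfrak I(x)\}$ ($x\in\mathrm{Vars}(\Phi)$) is a $\mathcal G_\Sigma$-fulfilling map for $\Phi$; in particular $\mathcal G_\Sigma$ fulfills $\Phi$.
   Context: Sets range over the von Neumann universe of well-founded sets. For sets $s,t$, $s\otimes t=\{\{u,v\} : u\in s,\ v\in t\}$. A $\mathsf{BST}^{\otimes}$-conjunction is a finite conjunction of literals of the forms $x=y\cup z$, $x=y\setminus z$, $x=y\otimes z$, $x\neq y$. A partition is a set of pairwise disjoint nonempty sets (blocks). A partition assignment is a map $\mathfrak I:V\to\mathcal P(\Sigma)$ on a finite set $V$ of variables; it induces the set assignment $M_{\mathfrak I}v=\bigcup\mathfrak I(v)$, and $\Sigma$ satisfies $\Phi$ via $\mathfrak I$ if $M_{\mathfrak I}$ satisfies $\Phi$. For a set $S$, $\mathrm{Pow}^*_{1,2}(S)=\{t\subseteq\bigcup S : 1\le|t|\le2,\ t\cap s\neq\emptyset\text{ for all }s\in S\}$, and for a family $\mathcal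 B$, $\mathrm{Pow}^*_{1,2}[\mathcal B]=\{\mathrm{Pow}^*_{1,2}(B):B\in\mathcal B\}$. A subset $\Sigma^*\subseteq\Sigma$ is a $\otimes$-subpartition if $\bigcup\Sigma^*=\bigcup\mathrm{Pow}^*_{1,2}[\mathcal B]$ for some $\mathcal B\subseteq\Sigma\otimes\Sigma$; $\Sigma_\otimes$ is the largest $\otimes$-subpartition (its elements are $\otimes$-blocks) and $\Pi_\otimes\subseteq\Sigma\otimes\Sigma$ is the (unique) set with $\bigcup\Sigma_\otimes=\bigcup\mathrm{Pow}^*_{1,2}[\Pi_\otimes]$. A $\otimes$-graph $\mathcal G=(\mathcal P,\mathcal N,\mathcal T)$ consists of a set $\mathcal P$ of places, nodes $\mathcal N=\mathcal P\otimes\mathcal P$ (nonempty subsets of $\mathcal P$ with at most two elements), $\mathcal P\cap\mathcal N=\emptyset$, and a target map $\mathcal T:\mathcal N\to\mathcal P(\mathcal P)$. The $\otimes$-graph induced by $\Sigma$ via a bijection $q\mapsto q^{(\bullet)}$ from a set of places $\mathcal P_\Sigma$ (with $\mathcal P_\Sigma\cap(\mathcal P_\Sigma\otimes\mathcal P_\Sigma)=\emptyset$) onto $\Sigma$ has nodes $\mathcal N_\Sigma=\mathcal P_\Sigma\otimes\mathcal P_\Sigma$ and, writing $B^{(\bullet)}=\{q^{(\bullet)}:q\in B\}$, target map $\mathcal T_\Sigma(B)=\{q\in\mathcal P_\Sigma : q^{(\bullet)}\in\Sigma_\otimes,\ q^{(\bullet)}\cap\mathrm{Pow}^*_{1,2}(B^{(\bullet)})\neq\emptyset\}$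 if $B^{(\bullet)}\in\Pi_\otimes$, and $\mathcal T_\Sigma(B)=\emptyset$ otherwise. A map $\mathfrak F:\mathrm{Vars}(\Phi)\to\mathcal P(\mathcal P)$ is $\mathcal G$-fulfilling for $\Phi$ if: (a) $\mathfrak F(x)=\mathfrak F(y)\star\mathfrak F(z)$ for each conjunct $x=y\star z$, $\star\in\{\cup,\setminus\}$; (b) $\mathfrak F(x)\neq\mathfrak F(y)$ for each conjunct $x\neq y$; (c) for each conjunct $x=y\otimes z$: (c1) $\emptyset\neq\mathcal T(\{\upsilon,\zeta\})\subseteq\mathfrak F(x)$ for all $\upsilon\in\mathfrak F(y),\zeta\in\mathfrak F(z)$; (c2) $\mathfrak F(x)\subseteq\bigcup\{\mathcal T(A):A\in\mathfrak F(y)\otimes\mathfrak F(z)\}$; (c3) $\bigcup\{\mathcal T(A):A\in\mathcal N\setminus(\mathfrak F(y)\otimes\mathfrak F(z))\}\cap\mathfrak F(x)=\emptyset$. $\mathcal G$ fulfills $\Phi$ if such a map exists. *)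

theory Defs
  imports Main
begin

text \<open>Sets of the von Neumann universe are modelled by an arbitrary type 'a equipped
with a membership map elts. Such a type is a set universe if membership is extensional,
well-founded, and closed under forming singletons and doubletons (the only set
formation the statement needs at the level of elements). Sets of elements (blocks,
values of set assignments) are HOL sets of type 'a set.\<close>

definition set_universe :: "('a \<Rightarrow> 'a set) \<Rightarrow> bool" where
  "set_universe elts \<longleftrightarrow>
     inj elts \<and> wf {(u, w). u \<in> elts w} \<and> (\<forall>u v. \<exists>w. elts w = {u, v})"

definition hotimes :: "'b set \<Rightarrow> 'b set \<Rightarrow> 'b set set" where
  "hotimes s t = {{u, v} | u v. u \<in> s \<and> v \<in> t}"

text \<open>The same operation inside the universe: its members are the elements w
whose extension is a set {u,v} with u in s and v in t.\<close>
definition votimes :: "('a \<Rightarrow> 'a set) \<Rightarrow> 'a set \<Rightarrow> 'a set \<Rightarrow> 'a set" where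
  "votimes elts s t = {w. elts w \<in> hotimes s t}"

datatype 'v lit =
    LUn 'v 'v 'v
  | LDiff 'v 'v 'v
  | LTens 'v 'v 'v
  | LNeq 'v 'v

type_synonym 'v conj = "'v lit list"

fun lit_vars :: "'v lit \<Rightarrow> 'v set" where
  "lit_vars (LUn x y z) = {x, y, z}"
| "lit_vars (LDiff x y z) = {x, y, z}"
| "lit_vars (LTens x y z) = {x, y, z}"
| "lit_vars (LNeq x y) = {x, y}"

definition Vars :: "'v conj \<Rightarrow> 'v set" where
  "Vars \<Phi> = (\<Union>l\<in>set \<Phi>. lit_vars l)"

fun holds_lit :: "('a \<Rightarrow> 'a set) \<Rightarrow> ('v \<Rightarrow> 'a set) \<Rightarrow> 'v lit \<Rightarrow> bool" where
  "holds_lit elts M (LUn x y z) \<longleftrightarrow> M x = M y \<union> M z"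
| "holds_lit elts M (LDiff x y z) \<longleftrightarrow> M x = M y - M z"
| "holds_lit elts M (LTens x y z) \<longleftrightarrow> M x = votimes elts (M y) (M z)"
| "holds_lit elts M (LNeq x y) \<longleftrightarrow> M x \<noteq> M y"

definition satisfies :: "('a \<Rightarrow> 'a set) \<Rightarrow> ('v \<Rightarrow> 'a set) \<Rightarrow> 'v conj \<Rightarrow> bool" where
  "satisfies elts M \<Phi> \<longleftrightarrow> (\<forall>l\<in>set \<Phi>. holds_lit elts M l)"

definition is_partition :: "'b set set \<Rightarrow> bool" where
  "is_partition \<Sigma> \<longleftrightarrow> (\<forall>\<sigma>\<in>\<Sigma>. \<sigma> \<noteq> {}) \<and>
     (\<forall>\<sigma>\<in>\<Sigma>. \<forall>\<tau>\<in>\<Sigma>. \<sigma> \<noteq> \<tau> \<longrightarrow> \<sigma> \<inter> \<tau> = {})"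

definition induced_assign :: "('v \<Rightarrow> 'b set set) \<Rightarrow> 'v \<Rightarrow> 'b set" where
  "induced_assign I v = \<Union>(I v)"

definition satisfies_via :: "('a \<Rightarrow> 'a set) \<Rightarrow> 'a set set \<Rightarrow> ('v \<Rightarrow> 'a set set) \<Rightarrow> 'v conj \<Rightarrow> bool" where
  "satisfies_via elts \<Sigma> I \<Phi> \<longleftrightarrow>
     (\<forall>x\<in>Vars \<Phi>. I x \<subseteq> \<Sigma>) \<and> satisfies elts (induced_assign I) \<Phi>"

definition pow12 :: "'b set set \<Rightarrow> 'b set set" where
  "pow12 S = {t. t \<subseteq> \<Union>S \<and> 1 \<le> card t \<and> card t \<le> 2 \<and> (\<forall>s\<in>S. t \<inter> s \<noteq> {})}"

definition Upow12 :: "('a \<Rightarrow> 'a set) \<Rightarrow> 'a set set set \<Rightarrow> 'a set" where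
  "Upow12 elts \<B> = {w. elts w \<in> (\<Union>B\<in>\<B>. pow12 B)}"

definition otimes_subpartition :: "('a \<Rightarrow> 'a set) \<Rightarrow> 'a set set \<Rightarrow> 'a set set \<Rightarrow> bool" where
  "otimes_subpartition elts \<Sigma> \<Sigma>s \<longleftrightarrow> \<Sigma>s \<subseteq> \<Sigma> \<and>
     (\<exists>\<B>. \<B> \<subseteq> hotimes \<Sigma> \<Sigma> \<and> \<Union>\<Sigma>s = Upow12 elts \<B>)"

definition Sigma_otimes :: "('a \<Rightarrow> 'a set) \<Rightarrow> 'a set set \<Rightarrow> 'a set set" where
  "Sigma_otimes elts \<Sigma> = \<Union>{\<Sigma>s. otimes_subpartition elts \<Sigma> \<Sigma>s}"

definition Pi_otimes :: "('a \<Rightarrow> 'a set) \<Rightarrow> 'a set set \<Rightarrow> 'a set set set" where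
  "Pi_otimes elts \<Sigma> = (THE \<Pi>. \<Pi> \<subseteq> hotimes \<Sigma> \<Sigma> \<and>
      \<Union>(Sigma_otimes elts \<Sigma>) = Upow12 elts \<Pi>)"

text \<open>A otimes-graph is given by its set of places P (a type 'p distinct from
the type 'p set of nodes, so places and nodes are disjoint) and a target map T;
its set of nodes is hotimes P P.\<close>

definition nodes :: "'p set \<Rightarrow> 'p set set" where
  "nodes P = hotimes P P"

definition T_induced :: "('a \<Rightarrow> 'a set) \<Rightarrow> 'a set set \<Rightarrow> 'p set \<Rightarrow> ('p \<Rightarrow> 'a set)
    \<Rightarrow> 'p set \<Rightarrow> 'p set" where
  "T_induced elts \<Sigma> P bul B =
     (if bul ` B \<in> Pi_otimes elts \<Sigma>
      then {q\<in>P. bul q \<in> Sigma_otimes elts \<Sigma> \<and>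
                  (\<exists>w\<in>bul q. elts w \<in> pow12 (bul ` B))}
      else {})"

fun fulfills_lit :: "'p set \<Rightarrow> ('p set \<Rightarrow> 'p set) \<Rightarrow> ('v \<Rightarrow> 'p set) \<Rightarrow> 'v lit \<Rightarrow> bool" where
  "fulfills_lit P T F (LUn x y z) \<longleftrightarrow> F x = F y \<union> F z"
| "fulfills_lit P T F (LDiff x y z) \<longleftrightarrow> F x = F y - F z"
| "fulfills_lit P T F (LNeq x y) \<longleftrightarrow> F x \<noteq> F y"
| "fulfills_lit P T F (LTens x y z) \<longleftrightarrow>
     (\<forall>\<upsilon>\<in>F y. \<forall>\<zeta>\<in>F z. T {\<upsilon>, \<zeta>} \<noteq> {} \<and> T {\<upsilon>, \<zeta>} \<subseteq> F x) \<and>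
     F x \<subseteq> \<Union>(T ` hotimes (F y) (F z)) \<and>
     \<Union>(T ` (nodes P - hotimes (F y) (F z))) \<inter> F x = {}"

definition fulfilling_map :: "'p set \<Rightarrow> ('p set \<Rightarrow> 'p set) \<Rightarrow> 'v conj \<Rightarrow> ('v \<Rightarrow> 'p set) \<Rightarrow> bool" where
  "fulfilling_map P T \<Phi> F \<longleftrightarrow>
     (\<forall>x\<in>Vars \<Phi>. F x \<subseteq> P) \<and> (\<forall>l\<in>set \<Phi>. fulfills_lit P T F l)"

definition graph_fulfills :: "'p set \<Rightarrow> ('p set \<Rightarrow> 'p set) \<Rightarrow> 'v conj \<Rightarrow> bool" where
  "graph_fulfills P T \<Phi> \<longleftrightarrow> (\<exists>F. fulfilling_map P T \<Phi> F)"

end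

theory Submission
  imports Defs
begin

lemma part_eq:
  assumes "is_partition S" "s \<in> S" "t \<in> S" "a \<in> s" "a \<in> t"
  shows "s = t"
proof (rule ccontr)
  assume "s \<noteq> t"
  then have "s \<inter> t = {}" using assms(1-3) unfolding is_partition_def by blast
  then show False using assms(4,5) by blast
qed

lemma part_ne:
  assumes "is_partition S" "s \<in> S"
  shows "\<exists>a. a \<in> s"
proof -
  have "s \<noteq> {}" using assms unfolding is_partition_def by blast
  then show ?thesis by blast
qed

lemma pow12_char:
  assumes part: "is_partition S" and st: "\<sigma> \<in> S" "\<tau> \<in> S"
  shows "t \<in> pow12 {\<sigma>, \<tau>} \<longleftrightarrow> (\<exists>u\<in>\<sigma>. \<exists>v\<in>\<tau>. t = {u, v})"
proof
  assume h: "t \<in> pow12 {\<sigma>, \<tau>}"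
  have sub: "t \<subseteq> \<sigma> \<union> \<tau>" using h unfolding pow12_def by simp
  have c1: "1 \<le> card t" using h unfolding pow12_def by simp
  have c2: "card t \<le> 2" using h unfolding pow12_def by simp
  have m1: "t \<inter> \<sigma> \<noteq> {}" using h unfolding pow12_def by simp
  have m2: "t \<inter> \<tau> \<noteq> {}" using h unfolding pow12_def by simp
  have fin: "finite t"
  proof (rule ccontr)
    assume "infinite t"
    then have "card t = 0" by simp
    with c1 show False by simp
  qed
  obtain a where a: "a \<in> t" "a \<in> \<sigma>" using m1 by blast
  obtain b where b: "b \<in> t" "b \<in> \<tau>" using m2 by blast
  show "\<exists>u\<in>\<sigma>. \<exists>v\<in>\<tau>. t = {u, v}"
  proof (cases "a = b")
    case False
    have ab: "{a, b} \<subseteq> t" using a b by simp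
    moreover have "card {a, b} = 2" using False by simp
    ultimately have "{a, b} = t" using card_seteq[OF fin ab] c2 by simp
    then have "t = {a, b}" by simp
    then show ?thesis using a(2) b(2) by blast
  next
    case True
    then have eq: "\<sigma> = \<tau>" using part_eq[OF part st, of a] a b by simp
    have "card t = 1 \<or> card t = 2" using c1 c2 by linarith
    then show ?thesis
    proof
      assume "card t = 1"
      then obtain c where c: "t = {c}" using card_1_singletonE by blast
      then have "c = a" using a(1) by simp
      then have "t = {a, a}" using c by simp
      then show ?thesis using a(2) eq by blast
    next
      assume "card t = 2"
      then obtain c d where cd: "t = {c, d}" unfolding card_2_iff by blast
      then have "c \<in> \<sigma>" "d \<in> \<tau>" using sub eq by auto
      then show ?thesis using cd by blast
    qed
  qed
next
  assume "\<exists>u\<in>\<sigma>. \<exists>v\<in>\<tau>. t = {u, v}"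
  then obtain u v where uv: "u \<in> \<sigma>" "v \<in> \<tau>" "t = {u, v}" by blast
  have "card {u, v} \<le> 2" by (simp add: card_insert_le_m1)
  moreover have "1 \<le> card {u, v}" by (simp add: Suc_leI card_gt_0_iff)
  moreover have "{u, v} \<subseteq> \<Union>{\<sigma>, \<tau>}" using uv by simp
  moreover have "\<forall>s\<in>{\<sigma>, \<tau>}. {u, v} \<inter> s \<noteq> {}" using uv by auto
  ultimately show "t \<in> pow12 {\<sigma>, \<tau>}" using uv(3) unfolding pow12_def by simp
qed

lemma same_pair:
  assumes part: "is_partition S" and "\<sigma> \<in> S" "\<tau> \<in> S" "\<sigma>' \<in> S" "\<tau>' \<in> S"
    "u \<in> \<sigma>" "v \<in> \<tau>" "u' \<in> \<sigma>'" "v' \<in> \<tau>'" "{u, v} = {u', v'}"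
  shows "{\<sigma>, \<tau>} = {\<sigma>', \<tau>'}"
proof -
  have "(u = u' \<and> v = v') \<or> (u = v' \<and> v = u')" using assms(10) by (metis doubleton_eq_iff)
  then show ?thesis
  proof
    assume "u = u' \<and> v = v'"
    then show ?thesis using part_eq[OF part] assms by metis
  next
    assume "u = v' \<and> v = u'"
    then have "\<sigma> = \<tau>'" "\<tau> = \<sigma>'" using part_eq[OF part] assms by metis+
    then show ?thesis by auto
  qed
qed

lemma hotimes_iff: "X \<in> hotimes s t \<longleftrightarrow> (\<exists>u\<in>s. \<exists>v\<in>t. X = {u, v})"
  unfolding hotimes_def by blast

lemma Upow12_iff: "w \<in> Upow12 elts B \<longleftrightarrow> (\<exists>b\<in>B. elts w \<in> pow12 b)"
  unfolding Upow12_def by blast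

lemma univ_ex:
  assumes "set_universe elts"
  shows "\<exists>w. elts w = {u, v}"
proof -
  have "\<forall>u v. \<exists>w. elts w = {u, v}"
    using assms unfolding set_universe_def by (rule conjunct2[THEN conjunct2])
  then show ?thesis by blast
qed

lemma hotimes_E:
  assumes "B \<in> hotimes S T"
  obtains u v where "u \<in> S" "v \<in> T" "B = {u, v}"
  using assms unfolding hotimes_def by blast

lemma Upow12_E:
  assumes "w \<in> Upow12 elts \<B>"
  obtains B where "B \<in> \<B>" "elts w \<in> pow12 B"
  using assms unfolding Upow12_def by blast

lemma Upow12_I:
  assumes "B \<in> \<B>" "elts w \<in> pow12 B"
  shows "w \<in> Upow12 elts \<B>"
  using assms unfolding Upow12_def by blast

lemma Upow12_mono_inv:
  assumes U: "set_universe elts" and part: "is_partition \<Sigma>"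
    and h1: "\<Pi>1 \<subseteq> hotimes \<Sigma> \<Sigma>" and h2: "\<Pi>2 \<subseteq> hotimes \<Sigma> \<Sigma>"
    and sub: "Upow12 elts \<Pi>1 \<subseteq> Upow12 elts \<Pi>2"
  shows "\<Pi>1 \<subseteq> \<Pi>2"
proof
  fix B assume B: "B \<in> \<Pi>1"
  then have "B \<in> hotimes \<Sigma> \<Sigma>" using h1 by (rule subsetD[rotated])
  then obtain \<sigma> \<tau> where st: "\<sigma> \<in> \<Sigma>" "\<tau> \<in> \<Sigma>" "B = {\<sigma>, \<tau>}" by (rule hotimes_E)
  obtain u where u: "u \<in> \<sigma>" using part_ne[OF part st(1)] by blast
  obtain v where v: "v \<in> \<tau>" using part_ne[OF part st(2)] by blast
  obtain w where w: "elts w = {u, v}" using univ_ex[OF U] by blast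
  have "elts w \<in> pow12 {\<sigma>, \<tau>}" using pow12_char[OF part st(1,2), THEN iffD2] u v w by blast
  then have "elts w \<in> pow12 B" using st(3) by simp
  then have "w \<in> Upow12 elts \<Pi>1" using B by (intro Upow12_I)
  then have "w \<in> Upow12 elts \<Pi>2" using sub by (rule subsetD[rotated])
  then obtain B' where B': "B' \<in> \<Pi>2" "elts w \<in> pow12 B'" by (rule Upow12_E)
  then have "B' \<in> hotimes \<Sigma> \<Sigma>" using h2 by (intro subsetD[OF h2])
  then obtain \<sigma>' \<tau>' where st': "\<sigma>' \<in> \<Sigma>" "\<tau>' \<in> \<Sigma>" "B' = {\<sigma>', \<tau>'}" by (rule hotimes_E)
  have "elts w \<in> pow12 {\<sigma>', \<tau>'}" using B'(2) st'(3) by simp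
  then obtain u' v' where uv': "u' \<in> \<sigma>'" "v' \<in> \<tau>'" "elts w = {u', v'}"
    using pow12_char[OF part st'(1,2), THEN iffD1] by blast
  have "B = B'" using same_pair[OF part st(1,2) st'(1,2) u v uv'(1,2)] uv'(3) w st(3) st'(3) by simp
  then show "B \<in> \<Pi>2" using B' by simp
qed

lemma Pi_char:
  assumes U: "set_universe elts" and part: "is_partition \<Sigma>"
  shows "Pi_otimes elts \<Sigma> \<subseteq> hotimes \<Sigma> \<Sigma> \<and>
         \<Union>(Sigma_otimes elts \<Sigma>) = Upow12 elts (Pi_otimes elts \<Sigma>)"
proof -
  define \<Pi>0 where "\<Pi>0 = \<Union>{B. B \<subseteq> hotimes \<Sigma> \<Sigma> \<and> (\<exists>\<Sigma>s. \<Sigma>s \<subseteq> \<Sigma> \<and> \<Union>\<Sigma>s = Upow12 elts B)}"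
  have e1: "\<Pi>0 \<subseteq> hotimes \<Sigma> \<Sigma>" unfolding \<Pi>0_def by blast
  have e2: "\<Union>(Sigma_otimes elts \<Sigma>) = Upow12 elts \<Pi>0"
  proof (rule set_eqI)
    fix w
    show "w \<in> \<Union>(Sigma_otimes elts \<Sigma>) \<longleftrightarrow> w \<in> Upow12 elts \<Pi>0"
    proof
      assume "w \<in> \<Union>(Sigma_otimes elts \<Sigma>)"
      then obtain \<Sigma>s where "otimes_subpartition elts \<Sigma> \<Sigma>s" "w \<in> \<Union>\<Sigma>s"
        unfolding Sigma_otimes_def by blast
      then obtain B where B: "B \<subseteq> hotimes \<Sigma> \<Sigma>" "\<Sigma>s \<subseteq> \<Sigma>" "\<Union>\<Sigma>s = Upow12 elts B" "w \<in> \<Union>\<Sigma>s"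
        unfolding otimes_subpartition_def by blast
      from B(3,4) have "w \<in> Upow12 elts B" by simp
      then obtain b where bb: "b \<in> B" "elts w \<in> pow12 b" by (rule Upow12_E)
      have "b \<in> \<Pi>0" unfolding \<Pi>0_def using B(1,2,3) bb(1) by blast
      then show "w \<in> Upow12 elts \<Pi>0" using bb(2) by (rule Upow12_I)
    next
      assume "w \<in> Upow12 elts \<Pi>0"
      then obtain b where b: "b \<in> \<Pi>0" "elts w \<in> pow12 b" by (rule Upow12_E)
      then obtain B \<Sigma>s where B: "b \<in> B" "B \<subseteq> hotimes \<Sigma> \<Sigma>" "\<Sigma>s \<subseteq> \<Sigma>" "\<Union>\<Sigma>s = Upow12 elts B"
        unfolding \<Pi>0_def by blast
      have "otimes_subpartition elts \<Sigma> \<Sigma>s" unfolding otimes_subpartition_def using B by blast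
      moreover have "w \<in> Upow12 elts B" using B(1) b(2) by (rule Upow12_I)
      then have "w \<in> \<Union>\<Sigma>s" using B(4) by simp
      ultimately show "w \<in> \<Union>(Sigma_otimes elts \<Sigma>)" unfolding Sigma_otimes_def by blast
    qed
  qed
  have ex1: "\<exists>!\<Pi>. \<Pi> \<subseteq> hotimes \<Sigma> \<Sigma> \<and> \<Union>(Sigma_otimes elts \<Sigma>) = Upow12 elts \<Pi>"
  proof (rule ex1I[of _ \<Pi>0])
    show "\<Pi>0 \<subseteq> hotimes \<Sigma> \<Sigma> \<and> \<Union>(Sigma_otimes elts \<Sigma>) = Upow12 elts \<Pi>0" using e1 e2 by blast
  next
    fix \<Pi> assume h: "\<Pi> \<subseteq> hotimes \<Sigma> \<Sigma> \<and> \<Union>(Sigma_otimes elts \<Sigma>) = Upow12 elts \<Pi>"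
    show "\<Pi> = \<Pi>0"
      using Upow12_mono_inv[OF U part, of \<Pi> \<Pi>0] Upow12_mono_inv[OF U part, of \<Pi>0 \<Pi>] h e1 e2
      by blast
  qed
  show ?thesis unfolding Pi_otimes_def by (rule theI'[OF ex1])
qed


lemma tens_case:
  assumes U: "set_universe elts" and part: "is_partition \<Sigma>"
    and bij: "bij_betw bul P \<Sigma>"
    and Ix: "I x \<subseteq> \<Sigma>" and Iy: "I y \<subseteq> \<Sigma>" and Iz: "I z \<subseteq> \<Sigma>"
    and eq: "\<Union>(I x) = votimes elts (\<Union>(I y)) (\<Union>(I z))"
  shows "fulfills_lit P (T_induced elts \<Sigma> P bul) (\<lambda>x. {q\<in>P. bul q \<in> I x}) (LTens x y z)"
proof -
  define F where "F = (\<lambda>x. {q\<in>P. bul q \<in> I x})"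
  define T where "T = T_induced elts \<Sigma> P bul"
  have bulS: "\<And>q. q \<in> P \<Longrightarrow> bul q \<in> \<Sigma>" using bij bij_betwE by blast
  have surjS: "\<And>\<sigma>. \<sigma> \<in> \<Sigma> \<Longrightarrow> \<exists>q\<in>P. bul q = \<sigma>" using bij bij_betw_imp_surj_on by blast
  have inj: "inj_on bul P" using bij bij_betw_imp_inj_on by blast
  have univ: "\<And>u v. \<exists>w. elts w = {u, v}" using univ_ex[OF U] by blast
  have memx: "\<And>w. w \<in> \<Union>(I x) \<longleftrightarrow> (\<exists>\<sigma>\<in>I y. \<exists>\<tau>\<in>I z. \<exists>u\<in>\<sigma>. \<exists>v\<in>\<tau>. elts w = {u, v})"
  proof -
    fix w
    have "w \<in> \<Union>(I x) \<longleftrightarrow> (\<exists>u\<in>\<Union>(I y). \<exists>v\<in>\<Union>(I z). elts w = {u, v})"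
      by (simp add: eq votimes_def hotimes_iff)
    also have "\<dots> \<longleftrightarrow> (\<exists>\<sigma>\<in>I y. \<exists>\<tau>\<in>I z. \<exists>u\<in>\<sigma>. \<exists>v\<in>\<tau>. elts w = {u, v})"
      by blast
    finally show "w \<in> \<Union>(I x) \<longleftrightarrow> (\<exists>\<sigma>\<in>I y. \<exists>\<tau>\<in>I z. \<exists>u\<in>\<sigma>. \<exists>v\<in>\<tau>. elts w = {u, v})" .
  qed
  have p12: "t \<in> pow12 {\<sigma>, \<tau>} \<longleftrightarrow> (\<exists>u\<in>\<sigma>. \<exists>v\<in>\<tau>. t = {u, v})"
    if "\<sigma> \<in> I y" "\<tau> \<in> I z" for \<sigma> \<tau> t
  proof -
    from that Iy Iz have "\<sigma> \<in> \<Sigma>" "\<tau> \<in> \<Sigma>" by auto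
    then show ?thesis by (rule pow12_char[OF part])
  qed
  have subpart: "otimes_subpartition elts \<Sigma> (I x)"
    unfolding otimes_subpartition_def
  proof (intro conjI exI[of _ "hotimes (I y) (I z)"])
    show "I x \<subseteq> \<Sigma>" by (rule Ix)
    show "hotimes (I y) (I z) \<subseteq> hotimes \<Sigma> \<Sigma>" using Iy Iz unfolding hotimes_def by blast
    show "\<Union>(I x) = Upow12 elts (hotimes (I y) (I z))"
    proof (rule set_eqI)
      fix w
      have "w \<in> Upow12 elts (hotimes (I y) (I z)) \<longleftrightarrow>
            (\<exists>\<sigma>\<in>I y. \<exists>\<tau>\<in>I z. elts w \<in> pow12 {\<sigma>, \<tau>})"
      proof
        assume "w \<in> Upow12 elts (hotimes (I y) (I z))"
        then obtain b where b: "b \<in> hotimes (I y) (I z)" "elts w \<in> pow12 b"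
          unfolding Upow12_iff by blast
        from b(1) obtain \<sigma> \<tau> where "\<sigma> \<in> I y" "\<tau> \<in> I z" "b = {\<sigma>, \<tau>}"
          unfolding hotimes_iff by blast
        then show "\<exists>\<sigma>\<in>I y. \<exists>\<tau>\<in>I z. elts w \<in> pow12 {\<sigma>, \<tau>}" using b(2) by blast
      next
        assume "\<exists>\<sigma>\<in>I y. \<exists>\<tau>\<in>I z. elts w \<in> pow12 {\<sigma>, \<tau>}"
        then obtain \<sigma> \<tau> where st: "\<sigma> \<in> I y" "\<tau> \<in> I z" "elts w \<in> pow12 {\<sigma>, \<tau>}" by blast
        then have "{\<sigma>, \<tau>} \<in> hotimes (I y) (I z)" unfolding hotimes_iff by blast
        then show "w \<in> Upow12 elts (hotimes (I y) (I z))" using st(3) unfolding Upow12_iff by blast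
      qed
      also have "\<dots> \<longleftrightarrow> (\<exists>\<sigma>\<in>I y. \<exists>\<tau>\<in>I z. \<exists>u\<in>\<sigma>. \<exists>v\<in>\<tau>. elts w = {u, v})"
        using p12 by (intro bex_cong) simp_all
      finally show "w \<in> \<Union>(I x) \<longleftrightarrow> w \<in> Upow12 elts (hotimes (I y) (I z))" using memx by blast
    qed
  qed
  have IxSo: "I x \<subseteq> Sigma_otimes elts \<Sigma>" using subpart unfolding Sigma_otimes_def by blast
  have PiC: "Pi_otimes elts \<Sigma> \<subseteq> hotimes \<Sigma> \<Sigma>"
    and PiU: "\<Union>(Sigma_otimes elts \<Sigma>) = Upow12 elts (Pi_otimes elts \<Sigma>)"
    using Pi_char[OF U part] by blast+
  have inPi: "{\<sigma>, \<tau>} \<in> Pi_otimes elts \<Sigma>" if st: "\<sigma> \<in> I y" "\<tau> \<in> I z" for \<sigma> \<tau>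
  proof -
    have stS: "\<sigma> \<in> \<Sigma>" "\<tau> \<in> \<Sigma>" using st Iy Iz by blast+
    obtain u v where uv: "u \<in> \<sigma>" "v \<in> \<tau>" using part_ne[OF part] stS by blast
    obtain w where w: "elts w = {u, v}" using univ by blast
    have "w \<in> \<Union>(I x)" unfolding memx using st uv w by blast
    then have "w \<in> \<Union>(Sigma_otimes elts \<Sigma>)" using IxSo by blast
    then have "w \<in> Upow12 elts (Pi_otimes elts \<Sigma>)" by (simp only: PiU)
    then obtain b where b: "b \<in> Pi_otimes elts \<Sigma>" "elts w \<in> pow12 b" unfolding Upow12_iff by blast
    from b(1) PiC have "b \<in> hotimes \<Sigma> \<Sigma>" by blast
    then obtain \<sigma>' \<tau>' where st': "\<sigma>' \<in> \<Sigma>" "\<tau>' \<in> \<Sigma>" "b = {\<sigma>', \<tau>'}"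
      unfolding hotimes_iff by blast
    then obtain u' v' where uv': "u' \<in> \<sigma>'" "v' \<in> \<tau>'" "elts w = {u', v'}"
      using pow12_char[OF part st'(1,2)] b(2) by blast
    have "{\<sigma>, \<tau>} = b" using same_pair[OF part stS st'(1,2) uv uv'(1,2)] uv'(3) w st'(3) by simp
    then show ?thesis using b by simp
  qed
  have Tval: "T {\<upsilon>, \<zeta>} = {q\<in>P. bul q \<in> Sigma_otimes elts \<Sigma> \<and> (\<exists>w\<in>bul q. elts w \<in> pow12 {bul \<upsilon>, bul \<zeta>})}"
    if "bul \<upsilon> \<in> I y" "bul \<zeta> \<in> I z" for \<upsilon> \<zeta>
    using inPi[OF that] unfolding T_def T_induced_def by simp
  have c1: "T {\<upsilon>, \<zeta>} \<noteq> {} \<and> T {\<upsilon>, \<zeta>} \<subseteq> F x" if h: "\<upsilon> \<in> F y" "\<zeta> \<in> F z" for \<upsilon> \<zeta>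
  proof
    have hb: "bul \<upsilon> \<in> I y" "bul \<zeta> \<in> I z" using h unfolding F_def by auto
    obtain u v where uv: "u \<in> bul \<upsilon>" "v \<in> bul \<zeta>" using part_ne[OF part] hb Iy Iz by blast
    obtain w where w: "elts w = {u, v}" using univ by blast
    have "w \<in> \<Union>(I x)" unfolding memx using hb uv w by blast
    then obtain \<rho> where \<rho>: "\<rho> \<in> I x" "w \<in> \<rho>" by blast
    then obtain q where q: "q \<in> P" "bul q = \<rho>" using surjS Ix by blast
    have "elts w \<in> pow12 {bul \<upsilon>, bul \<zeta>}" using p12[OF hb, THEN iffD2] uv w by blast
    then have "q \<in> T {\<upsilon>, \<zeta>}" unfolding Tval[OF hb] using q \<rho> IxSo by blast
    then show "T {\<upsilon>, \<zeta>} \<noteq> {}" by blast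
    show "T {\<upsilon>, \<zeta>} \<subseteq> F x"
    proof
      fix q assume "q \<in> T {\<upsilon>, \<zeta>}"
      then obtain w where q: "q \<in> P" "w \<in> bul q" "elts w \<in> pow12 {bul \<upsilon>, bul \<zeta>}"
        unfolding Tval[OF hb] by blast
      have "w \<in> \<Union>(I x)" unfolding memx using hb p12[OF hb, THEN iffD1, OF q(3)] by blast
      then obtain \<rho> where \<rho>: "\<rho> \<in> I x" "w \<in> \<rho>" by blast
      have "bul q = \<rho>" using part_eq[OF part bulS[OF q(1)], of \<rho> w] \<rho> Ix q by blast
      then show "q \<in> F x" using q \<rho> unfolding F_def by blast
    qed
  qed
  have c2: "F x \<subseteq> \<Union>(T ` hotimes (F y) (F z))"
  proof
    fix q assume "q \<in> F x"
    then have q: "q \<in> P" "bul q \<in> I x" unfolding F_def by auto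
    obtain w where w: "w \<in> bul q" using part_ne[OF part] q Ix by blast
    then have "w \<in> \<Union>(I x)" using q by blast
    then obtain \<sigma> \<tau> u v where st: "\<sigma> \<in> I y" "\<tau> \<in> I z" "u \<in> \<sigma>" "v \<in> \<tau>" "elts w = {u, v}"
      using memx[THEN iffD1] by blast
    obtain \<upsilon> \<zeta> where vz: "\<upsilon> \<in> P" "bul \<upsilon> = \<sigma>" "\<zeta> \<in> P" "bul \<zeta> = \<tau>"
      using surjS st Iy Iz by blast
    have hb: "bul \<upsilon> \<in> I y" "bul \<zeta> \<in> I z" using vz st by auto
    have A: "{\<upsilon>, \<zeta>} \<in> hotimes (F y) (F z)" using vz hb unfolding F_def hotimes_iff by blast
    have "elts w \<in> pow12 {bul \<upsilon>, bul \<zeta>}" using p12[OF hb, THEN iffD2] st vz by blast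
    then have "q \<in> T {\<upsilon>, \<zeta>}" unfolding Tval[OF hb] using q w IxSo by blast
    then show "q \<in> \<Union>(T ` hotimes (F y) (F z))" using A by blast
  qed
  have c3: "\<Union>(T ` (nodes P - hotimes (F y) (F z))) \<inter> F x = {}"
  proof (rule ccontr)
    assume "\<Union>(T ` (nodes P - hotimes (F y) (F z))) \<inter> F x \<noteq> {}"
    then obtain A q where A: "A \<in> nodes P" "A \<notin> hotimes (F y) (F z)" "q \<in> T A" "q \<in> F x" by blast
    have "A \<in> hotimes P P" using A(1) unfolding nodes_def .
    then obtain a b where ab: "a \<in> P" "b \<in> P" "A = {a, b}" by (rule hotimes_E)
    have qA: "q \<in> T_induced elts \<Sigma> P bul A" using A(3) unfolding T_def .
    have "bul ` A \<in> Pi_otimes elts \<Sigma>"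
    proof (rule ccontr)
      assume "bul ` A \<notin> Pi_otimes elts \<Sigma>"
      then have "T_induced elts \<Sigma> P bul A = {}" unfolding T_induced_def by simp
      then show False using qA by simp
    qed
    then have "q \<in> {q\<in>P. bul q \<in> Sigma_otimes elts \<Sigma> \<and> (\<exists>w\<in>bul q. elts w \<in> pow12 (bul ` A))}"
      using qA unfolding T_induced_def by simp
    then have qT: "q \<in> P" "\<exists>w\<in>bul q. elts w \<in> pow12 {bul a, bul b}"
      using ab(3) by simp_all
    then obtain w where w: "w \<in> bul q" "elts w \<in> pow12 {bul a, bul b}" by blast
    then obtain u' v' where uv': "u' \<in> bul a" "v' \<in> bul b" "elts w = {u', v'}"
      using pow12_char[OF part bulS[OF ab(1)] bulS[OF ab(2)], THEN iffD1, OF w(2)] by blast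
    have "w \<in> \<Union>(I x)" using w A(4) unfolding F_def by blast
    then obtain \<sigma> \<tau> u v where st: "\<sigma> \<in> I y" "\<tau> \<in> I z" "u \<in> \<sigma>" "v \<in> \<tau>" "elts w = {u, v}"
      using memx[THEN iffD1] by blast
    obtain \<upsilon> \<zeta> where vz: "\<upsilon> \<in> P" "bul \<upsilon> = \<sigma>" "\<zeta> \<in> P" "bul \<zeta> = \<tau>"
      using surjS st Iy Iz by blast
    have stS: "\<sigma> \<in> \<Sigma>" "\<tau> \<in> \<Sigma>" using st Iy Iz by blast+
    have "{\<sigma>, \<tau>} = {bul a, bul b}"
      using same_pair[OF part stS bulS[OF ab(1)] bulS[OF ab(2)] st(3,4) uv'(1,2)] st(5) uv'(3)
      by simp
    then have "{bul \<upsilon>, bul \<zeta>} = {bul a, bul b}" using vz by simp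
    then have "(bul \<upsilon> = bul a \<and> bul \<zeta> = bul b) \<or> (bul \<upsilon> = bul b \<and> bul \<zeta> = bul a)"
      unfolding doubleton_eq_iff .
    then have "(\<upsilon> = a \<and> \<zeta> = b) \<or> (\<upsilon> = b \<and> \<zeta> = a)"
      using inj_onD[OF inj] vz(1,3) ab(1,2) by metis
    then have e: "{\<upsilon>, \<zeta>} = {a, b}" by auto
    have "\<upsilon> \<in> F y" "\<zeta> \<in> F z" using vz st unfolding F_def by simp_all
    then have "{\<upsilon>, \<zeta>} \<in> hotimes (F y) (F z)" unfolding hotimes_def by blast
    then show False using A(2) ab(3) e by simp
  qed
  have "fulfills_lit P T F (LTens x y z)"
    unfolding fulfills_lit.simps using c1 c2 c3 by blast
  then show ?thesis unfolding F_def T_def .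
qed

lemma union_inj:
  assumes part: "is_partition \<Sigma>" and "A \<subseteq> \<Sigma>" "B \<subseteq> \<Sigma>" "\<Union>A = \<Union>B"
  shows "A = B"
proof -
  have *: "X \<subseteq> Y" if XS: "X \<subseteq> \<Sigma>" and YS: "Y \<subseteq> \<Sigma>" and e: "\<Union>X = \<Union>Y" for X Y
  proof
    fix s assume s: "s \<in> X"
    then have sS: "s \<in> \<Sigma>" using XS by (rule subsetD[rotated])
    obtain a where a: "a \<in> s" using part_ne[OF part sS] by blast
    then have "a \<in> \<Union>Y" using s e by blast
    then obtain t where t: "t \<in> Y" "a \<in> t" by blast
    have tS: "t \<in> \<Sigma>" using t(1) YS by (rule subsetD[rotated])
    have "s = t" using part_eq[OF part sS tS a t(2)] .
    then show "s \<in> Y" using t(1) by simp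
  qed
  show ?thesis using *[of A B] *[of B A] assms by blast
qed

lemma union_diff:
  assumes part: "is_partition \<Sigma>" and AS: "A \<subseteq> \<Sigma>" and BS: "B \<subseteq> \<Sigma>"
  shows "\<Union>(A - B) = \<Union>A - \<Union>B"
proof
  show "\<Union>A - \<Union>B \<subseteq> \<Union>(A - B)" by blast
  show "\<Union>(A - B) \<subseteq> \<Union>A - \<Union>B"
  proof
    fix a assume "a \<in> \<Union>(A - B)"
    then obtain s where s: "s \<in> A" "s \<notin> B" "a \<in> s" by blast
    have sS: "s \<in> \<Sigma>" using s(1) AS by (rule subsetD[rotated])
    have "a \<notin> \<Union>B"
    proof
      assume "a \<in> \<Union>B"
      then obtain t where t: "t \<in> B" "a \<in> t" by blast
      have tS: "t \<in> \<Sigma>" using t(1) BS by (rule subsetD[rotated])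
      have "s = t" using part_eq[OF part sS tS s(3) t(2)] .
      then show False using s(2) t(1) by simp
    qed
    then show "a \<in> \<Union>A - \<Union>B" using s by blast
  qed
qed

lemma bul_img:
  assumes bij: "bij_betw bul P \<Sigma>" and AS: "A \<subseteq> \<Sigma>"
  shows "bul ` {q\<in>P. bul q \<in> A} = A"
proof
  show "bul ` {q\<in>P. bul q \<in> A} \<subseteq> A" by blast
  show "A \<subseteq> bul ` {q\<in>P. bul q \<in> A}"
  proof
    fix s assume s: "s \<in> A"
    then have "s \<in> bul ` P" using AS bij unfolding bij_betw_def by blast
    then obtain q where "q \<in> P" "s = bul q" by blast
    then show "s \<in> bul ` {q\<in>P. bul q \<in> A}" using s by blast
  qed
qed

theorem mainTheorem8:
  fixes elts :: "'a \<Rightarrow> 'a set"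
    and \<Phi> :: "'v lit list"
    and \<Sigma> :: "'a set set"
    and I :: "'v \<Rightarrow> 'a set set"
    and P :: "'p set"
    and bul :: "'p \<Rightarrow> 'a set"
  assumes "set_universe elts"
    and "is_partition \<Sigma>"
    and "satisfies_via elts \<Sigma> I \<Phi>"
    and "bij_betw bul P \<Sigma>"
  shows "fulfilling_map P (T_induced elts \<Sigma> P bul) \<Phi> (\<lambda>x. {q\<in>P. bul q \<in> I x})
       \<and> graph_fulfills P (T_induced elts \<Sigma> P bul) \<Phi>"
proof -
  note U = assms(1) and part = assms(2) and bij = assms(4)
  define F where "F = (\<lambda>x. {q\<in>P. bul q \<in> I x})"
  have IS: "I x \<subseteq> \<Sigma>" if "x \<in> Vars \<Phi>" for x
    using assms(3) that unfolding satisfies_via_def by simp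
  have sat: "holds_lit elts (induced_assign I) l" if "l \<in> set \<Phi>" for l
    using assms(3) that unfolding satisfies_via_def satisfies_def by simp
  have LV: "lit_vars l \<subseteq> Vars \<Phi>" if "l \<in> set \<Phi>" for l
    using that unfolding Vars_def by blast
  have lits: "fulfills_lit P (T_induced elts \<Sigma> P bul) F l" if l: "l \<in> set \<Phi>" for l
  proof (cases l)
    case (LUn x y z)
    have V: "x \<in> Vars \<Phi>" "y \<in> Vars \<Phi>" "z \<in> Vars \<Phi>" using LV[OF l] LUn by simp_all
    have S: "I x \<subseteq> \<Sigma>" "I y \<subseteq> \<Sigma>" "I z \<subseteq> \<Sigma>" using IS[OF V(1)] IS[OF V(2)] IS[OF V(3)] .
    have h: "holds_lit elts (induced_assign I) (LUn x y z)" using sat[OF l] unfolding LUn .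
    have "\<Union>(I x) = \<Union>(I y) \<union> \<Union>(I z)" using h unfolding holds_lit.simps induced_assign_def .
    then have "\<Union>(I x) = \<Union>(I y \<union> I z)" unfolding Union_Un_distrib .
    note ue = this
    have us: "I y \<union> I z \<subseteq> \<Sigma>" using S(2,3) by blast
    have e: "I x = I y \<union> I z" by (rule union_inj[OF part S(1) us ue])
    have m: "\<forall>s. s \<in> I x \<longleftrightarrow> s \<in> I y \<union> I z" using e unfolding set_eq_iff .
    have "F x = F y \<union> F z"
    proof (rule set_eqI)
      fix q
      have mq: "bul q \<in> I x \<longleftrightarrow> bul q \<in> I y \<union> I z" using m by (rule spec)
      show "q \<in> F x \<longleftrightarrow> q \<in> F y \<union> F z" unfolding F_def mem_Collect_eq Un_iff using mq by blast
    qed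
    then show ?thesis using LUn by (simp only: fulfills_lit.simps)
  next
    case (LDiff x y z)
    have V: "x \<in> Vars \<Phi>" "y \<in> Vars \<Phi>" "z \<in> Vars \<Phi>" using LV[OF l] LDiff by simp_all
    have S: "I x \<subseteq> \<Sigma>" "I y \<subseteq> \<Sigma>" "I z \<subseteq> \<Sigma>" using IS[OF V(1)] IS[OF V(2)] IS[OF V(3)] .
    have h: "holds_lit elts (induced_assign I) (LDiff x y z)" using sat[OF l] unfolding LDiff .
    have "\<Union>(I x) = \<Union>(I y) - \<Union>(I z)" using h unfolding holds_lit.simps induced_assign_def .
    then have "\<Union>(I x) = \<Union>(I y - I z)" unfolding union_diff[OF part S(2,3)] .
    note ue = this
    have us: "I y - I z \<subseteq> \<Sigma>" using S(2,3) by blast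
    have e: "I x = I y - I z" by (rule union_inj[OF part S(1) us ue])
    have m: "\<forall>s. s \<in> I x \<longleftrightarrow> s \<in> I y - I z" using e unfolding set_eq_iff .
    have "F x = F y - F z"
    proof (rule set_eqI)
      fix q
      have mq: "bul q \<in> I x \<longleftrightarrow> bul q \<in> I y - I z" using m by (rule spec)
      show "q \<in> F x \<longleftrightarrow> q \<in> F y - F z" unfolding F_def mem_Collect_eq Diff_iff using mq by blast
    qed
    then show ?thesis using LDiff by (simp only: fulfills_lit.simps)
  next
    case (LTens x y z)
    have V: "x \<in> Vars \<Phi>" "y \<in> Vars \<Phi>" "z \<in> Vars \<Phi>" using LV[OF l] LTens by simp_all
    have S: "I x \<subseteq> \<Sigma>" "I y \<subseteq> \<Sigma>" "I z \<subseteq> \<Sigma>" using IS[OF V(1)] IS[OF V(2)] IS[OF V(3)] .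
    have h: "holds_lit elts (induced_assign I) (LTens x y z)" using sat[OF l] unfolding LTens .
    have "\<Union>(I x) = votimes elts (\<Union>(I y)) (\<Union>(I z))"
      using h unfolding holds_lit.simps induced_assign_def .
    note tc = tens_case[where I=I and x=x and y=y and z=z, OF U part bij S this]
    show ?thesis unfolding LTens F_def by (rule tc)
  next
    case (LNeq x y)
    have V: "x \<in> Vars \<Phi>" "y \<in> Vars \<Phi>" using LV[OF l] LNeq by simp_all
    have S: "I x \<subseteq> \<Sigma>" "I y \<subseteq> \<Sigma>" using IS[OF V(1)] IS[OF V(2)] .
    have "\<Union>(I x) \<noteq> \<Union>(I y)" using sat[OF l] LNeq by (simp add: induced_assign_def)
    then have ne: "I x \<noteq> I y" by auto
    have "F x \<noteq> F y"
    proof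
      assume "F x = F y"
      then have "bul ` F x = bul ` F y" by simp
      then show False using ne bul_img[OF bij S(1)] bul_img[OF bij S(2)] unfolding F_def by simp
    qed
    then show ?thesis using LNeq by simp
  qed
  have fm: "fulfilling_map P (T_induced elts \<Sigma> P bul) \<Phi> F"
    unfolding fulfilling_map_def
  proof (intro conjI ballI)
    show "F x \<subseteq> P" for x unfolding F_def by blast
    show "fulfills_lit P (T_induced elts \<Sigma> P bul) F l" if "l \<in> set \<Phi>" for l using lits[OF that] .
  qed
  then have "graph_fulfills P (T_induced elts \<Sigma> P bul) \<Phi>"
    unfolding graph_fulfills_def by blast
  then show ?thesis using fm unfolding F_def by simp
qed

end
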